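(* Let $\tilde r\in(\tfrac14,\tfrac12)$ and let $\rho$ be an RSR-representation of the four-punctured sphere whose local monodromies $M_j$ are conjugate to $\mathrm{diag}(e^{2\pi i\tilde r},e^{-2\pi i\tilde r})$, with trace coordinates $(\tilde x,\tilde y,\tilde z)=(\mathrm{Tr}(M_2M_1),\mathrm{Tr}(M_3M_2),\mathrm{Tr}(M_3M_1))$. Then, with $r=2\tilde r-\tfrac12$, there is a real representation (i.e. a real point of the character variety, conjugate to an $\mathrm{SL}(2,\mathbb{R})$-representation) in $\mathcal M^r_{1,1}$ whose trace coordinates $(x,y,z)$ satisfy $\tilde x=2-x^2$, $\tilde y=2-y^2$, $\tilde z=2-z^2$.
   Context: Four-punctured sphere $S_4=\mathbb{C}P^1\setminus\{p_1,\dots,p_4\}$ with generators $\gamma_{p_j}$ of $\pi_1(S_4,s_0)$ (simple anticlockwise loops around $p_j$) satisfying $\gamma_{p_4}\gamma_{p_3}\gamma_{p_2}\gamma_{p_1}=1$, $M_j=\rho(\gamma_{p_j})$. An irreducible representation $\rho\colon\pi_1(S_4,s_0)\to\mathrm{SL}(2,\mathbb{C})$ is RSR if: it takes values in $\mathrm{SL}(2,\mathbb{R})$ with $\mathrm{Tr}(M_1M_2),\mathrm{Tr}(M_2M_3),\mathrm{Tr}(M_1M_3)<-2$; all $M_j$ lie in the conjugacy class of $\mathrm{diag}(e^{2\pi i\tilde r},e^{-2\pi i\tilde r})$ with $\tilde r\in(\tfrac14,\tfrac12)$; and $\mathrm{tr}(M_1M_3)=\mathrm{tr}(M_2M_4)$.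 $\mathcal M^r_{1,1}$ is the space of conjugacy classes of representations $\langle\gamma_x,\gamma_y\rangle=\pi_1(T^2\setminus\{o\})\to\mathrm{SL}(2,\mathbb{C})$ such that the commutator $\gamma_y^{-1}\gamma_x^{-1}\gamma_y\gamma_x$ (a loop around the puncture) is mapped into the conjugacy class of $\mathrm{diag}(e^{-2\pi ir},e^{2\pi ir})$; trace coordinates $x=\mathrm{Tr}X$, $y=\mathrm{Tr}Y$, $z=\mathrm{Tr}(YX)$ with $X,Y$ the images of $\gamma_x,\gamma_y$; they satisfy $x^2+y^2+z^2-xyz-2-2\cos(2\pi r)=0$. *)

theory Defs
  imports "HOL-Analysis.Analysis"
begin

type_synonym cmat2 = "complex^2^2"

definition SL2C :: "cmat2 \<Rightarrow> bool" where
  "SL2C A \<longleftrightarrow> det A = 1"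

definition real_mat :: "cmat2 \<Rightarrow> bool" where
  "real_mat A \<longleftrightarrow> (\<forall>i j. A $ i $ j \<in> \<real>)"

definition SL2R :: "cmat2 \<Rightarrow> bool" where
  "SL2R A \<longleftrightarrow> SL2C A \<and> real_mat A"

definition diag2 :: "complex \<Rightarrow> complex \<Rightarrow> cmat2" where
  "diag2 a b = (\<chi> i j. if i = j then (if i = 1 then a else b) else 0)"

definition conj_class :: "cmat2 \<Rightarrow> cmat2 \<Rightarrow> bool" where
  "conj_class A B \<longleftrightarrow> (\<exists>P. invertible P \<and> A = P ** B ** matrix_inv P)"

text \<open>A representation of pi_1(S_4) = <g1,g2,g3,g4 | g4 g3 g2 g1 = 1> into SL(2,C)
  is determined by the images M1..M4 of the generators, subject to the relation.\<close>
definition rep_S4 :: "cmat2 \<Rightarrow> cmat2 \<Rightarrow> cmat2 \<Rightarrow> cmat2 \<Rightarrow> bool" where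
  "rep_S4 M1 M2 M3 M4 \<longleftrightarrow> SL2C M1 \<and> SL2C M2 \<and> SL2C M3 \<and> SL2C M4 \<and>
     M4 ** M3 ** M2 ** M1 = mat 1"

definition irreducible_rep :: "cmat2 list \<Rightarrow> bool" where
  "irreducible_rep Ms \<longleftrightarrow>
     \<not> (\<exists>v :: complex^2. v \<noteq> 0 \<and> (\<forall>M \<in> set Ms. \<exists>c. M *v v = c *s v))"

definition RSR :: "real \<Rightarrow> cmat2 \<Rightarrow> cmat2 \<Rightarrow> cmat2 \<Rightarrow> cmat2 \<Rightarrow> bool" where
  "RSR rt M1 M2 M3 M4 \<longleftrightarrow>
     rep_S4 M1 M2 M3 M4 \<and> irreducible_rep [M1, M2, M3, M4] \<and>
     SL2R M1 \<and> SL2R M2 \<and> SL2R M3 \<and> SL2R M4 \<and>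
     Re (trace (M1 ** M2)) < -2 \<and> Re (trace (M2 ** M3)) < -2 \<and> Re (trace (M1 ** M3)) < -2 \<and>
     (\<forall>M \<in> {M1, M2, M3, M4}.
        conj_class M (diag2 (cis (2 * pi * rt)) (cis (-(2 * pi * rt))))) \<and>
     trace (M1 ** M3) = trace (M2 ** M4)"

text \<open>A representation of pi_1(T^2 minus a point) = <gx, gy> (free) with X, Y its images,
  lying in M^r_{1,1}: commutator Y^-1 X^-1 Y X in the class of diag(e^{-2 pi i r}, e^{2 pi i r}).\<close>
definition in_M11 :: "real \<Rightarrow> cmat2 \<Rightarrow> cmat2 \<Rightarrow> bool" where
  "in_M11 r X Y \<longleftrightarrow> SL2C X \<and> SL2C Y \<and>
     conj_class (matrix_inv Y ** matrix_inv X ** Y ** X)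
                (diag2 (cis (-(2 * pi * r))) (cis (2 * pi * r)))"

definition real_rep2 :: "cmat2 \<Rightarrow> cmat2 \<Rightarrow> bool" where
  "real_rep2 X Y \<longleftrightarrow> (\<exists>P. invertible P \<and>
     real_mat (P ** X ** matrix_inv P) \<and> real_mat (P ** Y ** matrix_inv P))"

end

theory Submission
  imports Defs
begin

definition mk2 :: "complex \<Rightarrow> complex \<Rightarrow> complex \<Rightarrow> complex \<Rightarrow> cmat2" where
  "mk2 a b c d = (\<chi> i j. if i = 1 then (if j = 1 then a else b) else (if j = 1 then c else d))"

lemma two_ne: "(2::2) \<noteq> 1" by simp

lemma mk2_nth [simp]: "mk2 a b c d $ 1 $ 1 = a" "mk2 a b c d $ 1 $ 2 = b"
  "mk2 a b c d $ 2 $ 1 = c" "mk2 a b c d $ 2 $ 2 = d"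
  by (simp_all add: mk2_def)

lemma mk2_eta: "A = mk2 (A$1$1) (A$1$2) (A$2$1) (A$2$2)"
  unfolding mk2_def vec_eq_iff forall_2 by simp

lemma mk2_eq_iff: "mk2 a b c d = mk2 a' b' c' d' \<longleftrightarrow> a = a' \<and> b = b' \<and> c = c' \<and> d = d'"
  apply (rule iffI)
   apply (drule arg_cong[where f="\<lambda>M. (M$1$1, M$1$2, M$2$1, M$2$2)"])
   apply simp
  apply simp
  done

lemma mk2_mult [simp]: "mk2 a b c d ** mk2 e f g h = mk2 (a*e+b*g) (a*f+b*h) (c*e+d*g) (c*f+d*h)"
  by (simp add: vec_eq_iff forall_2 matrix_matrix_mult_def sum_2)

lemma mk2_trace [simp]: "trace (mk2 a b c d) = a + d"
  by (simp add: trace_def sum_2)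

lemma mk2_det [simp]: "det (mk2 a b c d) = a * d - b * c"
  by (simp add: det_2)

lemma mk2_one: "mat 1 = mk2 1 0 0 1"
  by (subst mk2_eta) (simp add: mat_def)

lemma diag2_mk2: "diag2 a b = mk2 a 0 0 b"
  by (subst mk2_eta) (simp add: diag2_def)

lemma real_mat_mk2: "real_mat (mk2 a b c d) \<longleftrightarrow> a \<in> \<real> \<and> b \<in> \<real> \<and> c \<in> \<real> \<and> d \<in> \<real>"
  unfolding real_mat_def by (simp add: forall_2)

lemma inv_props:
  assumes "invertible P"
  shows "P ** matrix_inv P = mat 1" "matrix_inv P ** P = mat 1"
  using someI_ex[OF assms[unfolded invertible_def]] unfolding matrix_inv_def by auto

lemma matrix_inv_eq:
  assumes "A ** B = mat 1" "B ** A = (mat 1 :: cmat2)"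
  shows "matrix_inv A = B"
proof -
  have inv: "invertible A" using assms invertible_def by blast
  have "matrix_inv A = matrix_inv A ** (A ** B)" using assms by simp
  also have "\<dots> = B" using inv_props[OF inv] by (simp add: matrix_mul_assoc)
  finally show ?thesis .
qed

lemma mk2_inv: "a*d - b*c = 1 \<Longrightarrow> matrix_inv (mk2 a b c d) = mk2 d (-b) (-c) a"
  by (rule matrix_inv_eq) (simp_all add: mk2_one algebra_simps)

lemma conj_trace: "conj_class A B \<Longrightarrow> trace A = trace B"
  unfolding conj_class_def
  by (metis inv_props(2) matrix_mul_assoc matrix_mul_lid trace_mul_sym)

lemma conj_intro:
  assumes "det P \<noteq> 0" "A ** P = P ** (B::cmat2)"
  shows "conj_class A B"
proof -
  have inv: "invertible P" using assms invertible_det_nz by blast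
  have "A = A ** (P ** matrix_inv P)" using inv_props[OF inv] by simp
  also have "\<dots> = P ** B ** matrix_inv P" using assms by (simp add: matrix_mul_assoc)
  finally show ?thesis unfolding conj_class_def using inv by blast
qed

lemma conj_diag:
  assumes "det C = 1" "trace C = \<mu> + \<nu>" "\<mu> * \<nu> = 1" "\<mu> \<noteq> \<nu>"
  shows "conj_class C (diag2 \<mu> \<nu>)"
proof -
  obtain a b c d where C: "C = mk2 a b c d" using mk2_eta by blast
  have dt: "a*d - b*c = 1" and tr: "a + d = \<mu> + \<nu>" using assms C by auto
  have dd: "d = \<mu> + \<nu> - a" using tr by (metis add_diff_cancel_left')
  have mn: "\<mu> - \<nu> \<noteq> 0" "\<nu> - \<mu> \<noteq> 0" using assms(4) by auto
  have m3: "\<mu> * \<nu> = 1" by (rule assms(3))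
  show ?thesis
  proof (cases "b = 0")
    case False
    show ?thesis
    proof (rule conj_intro[where P = "mk2 b b (\<mu> - a) (\<nu> - a)"])
      have "det (mk2 b b (\<mu> - a) (\<nu> - a)) = b * (\<nu> - \<mu>)" by (simp add: algebra_simps)
      then show "det (mk2 b b (\<mu> - a) (\<nu> - a)) \<noteq> 0" using False mn by simp
      show "C ** mk2 b b (\<mu> - a) (\<nu> - a) = mk2 b b (\<mu> - a) (\<nu> - a) ** diag2 \<mu> \<nu>"
        unfolding C diag2_mk2 mk2_mult mk2_eq_iff
        apply (intro conjI)
        using dt dd m3 by algebra+
    qed
  next
    case b0: True
    show ?thesis
    proof (cases "c = 0")
      case False
      show ?thesis
      proof (rule conj_intro[where P = "mk2 (\<mu> - d) (\<nu> - d) c c"])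
        have "det (mk2 (\<mu> - d) (\<nu> - d) c c) = c * (\<mu> - \<nu>)" by (simp add: algebra_simps)
        then show "det (mk2 (\<mu> - d) (\<nu> - d) c c) \<noteq> 0" using False mn by simp
        have aa: "a = \<mu> + \<nu> - d" using tr by (metis add_diff_cancel_right')
        show "C ** mk2 (\<mu> - d) (\<nu> - d) c c = mk2 (\<mu> - d) (\<nu> - d) c c ** diag2 \<mu> \<nu>"
          unfolding C diag2_mk2 mk2_mult mk2_eq_iff
          apply (intro conjI)
          using dt aa m3 by algebra+
      qed
    next
      case c0: True
      have ad: "a * d = 1" using dt b0 c0 by simp
      have "(a - \<mu>) * (a - \<nu>) = 0" using ad dd m3 by algebra
      then consider "a = \<mu>" | "a = \<nu>" by auto
      then show ?thesis
      proof cases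
        case 1
        then have "d = \<nu>" using dd by simp
        then show ?thesis
          using 1 b0 c0 by (intro conj_intro[where P = "mk2 1 0 0 1"]) (simp_all add: C diag2_mk2)
      next
        case 2
        then have "d = \<mu>" using dd by simp
        then show ?thesis
          using 2 b0 c0 by (intro conj_intro[where P = "mk2 0 1 1 0"]) (simp_all add: C diag2_mk2)
      qed
    qed
  qed
qed

lemma cis_sum: "cis \<theta> + cis (-\<theta>) = complex_of_real (2 * cos \<theta>)"
  by (simp add: complex_eq_iff)

lemma fricke_sum:
  fixes A B C :: cmat2
  shows "trace (A**B**C) + trace (A**C**B) = trace A * trace (B**C) + trace B * trace (A**C)
     + trace C * trace (A**B) - trace A * trace B * trace C"
proof -
  obtain a1 b1 c1 d1 where A: "A = mk2 a1 b1 c1 d1" using mk2_eta by blast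
  obtain a2 b2 c2 d2 where B: "B = mk2 a2 b2 c2 d2" using mk2_eta by blast
  obtain a3 b3 c3 d3 where C: "C = mk2 a3 b3 c3 d3" using mk2_eta by blast
  show ?thesis unfolding A B C mk2_mult mk2_trace by algebra
qed

lemma fricke_prod_gen:
  fixes A B C :: cmat2
  shows "trace (A**B**C) * trace (A**C**B) = det B * det C * trace A ^ 2 + det A * det C * trace B ^ 2
     + det A * det B * trace C ^ 2
     + det C * trace (A**B) ^ 2 + det A * trace (B**C) ^ 2 + det B * trace (A**C) ^ 2
     - det C * trace A * trace B * trace (A**B) - det A * trace B * trace C * trace (B**C)
     - det B * trace A * trace C * trace (A**C) + trace (A**B) * trace (B**C) * trace (A**C)
     - 4 * det A * det B * det C"
proof -
  obtain a1 b1 c1 d1 where A: "A = mk2 a1 b1 c1 d1" using mk2_eta by blast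
  obtain a2 b2 c2 d2 where B: "B = mk2 a2 b2 c2 d2" using mk2_eta by blast
  obtain a3 b3 c3 d3 where C: "C = mk2 a3 b3 c3 d3" using mk2_eta by blast
  show ?thesis unfolding A B C mk2_mult mk2_trace mk2_det by algebra
qed

lemma fricke_prod:
  fixes A B C :: cmat2
  assumes "det A = 1" "det B = 1" "det C = 1"
  shows "trace (A**B**C) * trace (A**C**B) = trace A ^ 2 + trace B ^ 2 + trace C ^ 2
     + trace (A**B) ^ 2 + trace (B**C) ^ 2 + trace (A**C) ^ 2
     - trace A * trace B * trace (A**B) - trace B * trace C * trace (B**C)
     - trace A * trace C * trace (A**C) + trace (A**B) * trace (B**C) * trace (A**C) - 4"
  using fricke_prod_gen[of A B C] assms by simp

lemma cubic_aux:
  fixes t u v z w :: complex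
  assumes s: "t + w = t * u + t * z + t * v - t*t*t"
    and p: "t * w = t^2 + t^2 + t^2 + v^2 + u^2 + z^2
     - t * t * v - t * t * u - t * t * z + v * u * z - 4"
  shows "((2 - u) + (2 - v) + (2 - z) - 4 + t^2)^2 = (2 - u) * (2 - v) * (2 - z)"
proof -
  have w: "w = t * u + t * z + t * v - t*t*t - t" using s by (simp add: algebra_simps)
  have E: "t^2 + t^2 + t^2 + v^2 + u^2 + z^2
     - t * t * v - t * t * u - t * t * z + v * u * z - 4 - t * (t * u + t * z + t * v - t*t*t - t) = 0"
    using p unfolding w by simp
  have "((2 - u) + (2 - v) + (2 - z) - 4 + t^2)^2 - (2 - u) * (2 - v) * (2 - z)
    = t^2 + t^2 + t^2 + v^2 + u^2 + z^2
     - t * t * v - t * t * u - t * t * z + v * u * z - 4 - t * (t * u + t * z + t * v - t*t*t - t)"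
    by (simp add: algebra_simps power2_eq_square power3_eq_cube power4_eq_xxxx)
  then show ?thesis using E by simp
qed

lemma fricke_cubic:
  fixes A B C :: cmat2 and t :: complex
  assumes "det A = 1" "det B = 1" "det C = 1"
    and "trace A = t" "trace B = t" "trace C = t" "trace (A**B**C) = t"
  shows "((2 - trace (B**C)) + (2 - trace (A**B)) + (2 - trace (A**C)) - 4 + t^2)^2
        = (2 - trace (B**C)) * (2 - trace (A**B)) * (2 - trace (A**C))"
proof (rule cubic_aux[where w = "trace (A**C**B)"])
  show "t + trace (A**C**B) = t * trace (B**C) + t * trace (A**C) + t * trace (A**B) - t*t*t"
    using fricke_sum[of A B C] assms by simp
  show "t * trace (A**C**B) = t^2 + t^2 + t^2 + trace (A**B)^2 + trace (B**C)^2 + trace (A**C)^2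
     - t * t * trace (A**B) - t * t * trace (B**C) - t * t * trace (A**C)
     + trace (A**B) * trace (B**C) * trace (A**C) - 4"
    using fricke_prod[OF assms(1-3)] assms by simp
qed

lemma real_trace_prod:
  assumes "real_mat A" "real_mat B"
  shows "trace (A ** B) \<in> \<real>"
proof -
  obtain a1 b1 c1 d1 where A: "A = mk2 a1 b1 c1 d1" using mk2_eta by blast
  obtain a2 b2 c2 d2 where B: "B = mk2 a2 b2 c2 d2" using mk2_eta by blast
  show ?thesis using assms unfolding A B real_mat_mk2 by simp
qed

lemma sl2_inv_trace:
  fixes M W :: cmat2
  assumes "det W = 1" "M ** W = mat 1"
  shows "trace M = trace W"
proof -
  obtain p q r s where W: "W = mk2 p q r s" using mk2_eta by blast
  have "M = M ** (W ** mk2 s (-q) (-r) p)"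
    using assms unfolding W by (simp add: mk2_one[symmetric] algebra_simps)
  also have "\<dots> = mk2 s (-q) (-r) p" by (metis assms(2) matrix_mul_assoc matrix_mul_lid)
  finally show ?thesis unfolding W by simp
qed

theorem corollary3p12:
  fixes rt :: real and M1 M2 M3 M4 :: cmat2
  assumes "1/4 < rt" and "rt < 1/2"
    and "RSR rt M1 M2 M3 M4"
  shows "\<exists>X Y. in_M11 (2 * rt - 1/2) X Y \<and> real_rep2 X Y \<and>
           trace (M2 ** M1) = 2 - (trace X)^2 \<and>
           trace (M3 ** M2) = 2 - (trace Y)^2 \<and>
           trace (M3 ** M1) = 2 - (trace (Y ** X))^2"
proof -
  define \<theta> where "\<theta> = 2 * pi * rt"
  define t where "t = 2 * cos \<theta>"
  note R = assms(3)[unfolded RSR_def rep_S4_def SL2R_def SL2C_def]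
  have trD: "trace (diag2 (cis (2 * pi * rt)) (cis (-(2 * pi * rt)))) = complex_of_real t"
    unfolding diag2_mk2 mk2_trace t_def \<theta>_def by (rule cis_sum)
  have tr1: "trace M1 = complex_of_real t" and tr2: "trace M2 = complex_of_real t"
    and tr3: "trace M3 = complex_of_real t" and tr4: "trace M4 = complex_of_real t"
    using R conj_trace trD by auto
  have d1: "det M1 = 1" and d2: "det M2 = 1" and d3: "det M3 = 1" and d4: "det M4 = 1"
    using R by auto
  have W: "M4 ** (M3 ** M2 ** M1) = mat 1" using R by (simp add: matrix_mul_assoc)
  have dW: "det (M3 ** M2 ** M1) = 1" using d1 d2 d3 by (simp add: det_mul)
  have trW: "trace (M3 ** M2 ** M1) = complex_of_real t"
    using sl2_inv_trace[OF dW W] tr4 by simp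
  note cub = fricke_cubic[OF d3 d2 d1 tr3 tr2 tr1 trW]
  define u where "u = Re (trace (M2 ** M1))"
  define v where "v = Re (trace (M3 ** M2))"
  define w where "w = Re (trace (M3 ** M1))"
  have rm: "real_mat M1" "real_mat M2" "real_mat M3" using R by blast+
  have isre: "\<And>z. z \<in> \<real> \<Longrightarrow> complex_of_real (Re z) = z"
    by (metis Reals_cases Re_complex_of_real)
  have uu: "trace (M2 ** M1) = complex_of_real u" unfolding u_def
    by (rule isre[symmetric], rule real_trace_prod[OF rm(2) rm(1)])
  have vv: "trace (M3 ** M2) = complex_of_real v" unfolding v_def
    by (rule isre[symmetric], rule real_trace_prod[OF rm(3) rm(2)])
  have ww: "trace (M3 ** M1) = complex_of_real w" unfolding w_def
    by (rule isre[symmetric], rule real_trace_prod[OF rm(3) rm(1)])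
  have r12: "Re (trace (M1 ** M2)) < -2" and r23: "Re (trace (M2 ** M3)) < -2"
    and r13: "Re (trace (M1 ** M3)) < -2" using R by blast+
  have u2: "u < -2" using r12 unfolding u_def trace_mul_sym[of M1 M2] .
  have v2: "v < -2" using r23 unfolding v_def trace_mul_sym[of M2 M3] .
  have w2: "w < -2" using r13 unfolding w_def trace_mul_sym[of M1 M3] .
  define XX where "XX = 2 - u"
  define YY where "YY = 2 - v"
  define ZZ where "ZZ = 2 - w"
  have XX4: "XX > 4" and YY4: "YY > 4" and ZZ4: "ZZ > 4" using u2 v2 w2 XX_def YY_def ZZ_def by auto
  have "complex_of_real ((XX + YY + ZZ - 4 + t^2)^2) = complex_of_real (XX * YY * ZZ)"
    using cub unfolding uu vv ww XX_def YY_def ZZ_def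
    by (simp only: of_real_add of_real_diff of_real_power of_real_numeral of_real_mult)
  then have cubr: "(XX + YY + ZZ - 4 + t^2)^2 = XX * YY * ZZ" by (rule of_real_eq_iff[THEN iffD1])
  define x where "x = sqrt XX"
  define y where "y = sqrt YY"
  have x2: "x^2 = XX" and y2: "y^2 = YY" using XX4 YY4 x_def y_def by auto
  have xpos: "x > 0" and ypos: "y > 0" using XX4 YY4 x_def y_def by auto
  define z where "z = (XX + YY + ZZ - 4 + t^2) / (x * y)"
  have z2: "z^2 = ZZ"
  proof -
    have "z^2 = (XX + YY + ZZ - 4 + t^2)^2 / (x^2 * y^2)"
      unfolding z_def power_divide power_mult_distrib by (rule refl)
    also have "\<dots> = XX * YY * ZZ / (XX * YY)" unfolding cubr x2 y2 by (rule refl)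
    also have "\<dots> = ZZ" using XX4 YY4 by simp
    finally show ?thesis .
  qed
  have xyz: "x * y * z = XX + YY + ZZ - 4 + t^2" unfolding z_def using xpos ypos by simp
  define sq where "sq = sqrt (z^2 - 4)"
  have sq2: "sq^2 = z^2 - 4" using z2 ZZ4 sq_def by simp
  define b where "b = (- z + sq) / 2"
  have b2: "2 * b = sq - z" unfolding b_def by simp
  have "4 * (b^2 + z * b + 1) = (2*b)^2 + z * (2*b) * 2 + 4"
    by (simp add: power2_eq_square algebra_simps)
  also have "\<dots> = (sq - z)^2 + z * (sq - z) * 2 + 4" by (simp only: b2)
  also have "\<dots> = sq^2 - z^2 + 4" by (simp add: power2_eq_square algebra_simps)
  also have "\<dots> = 0" using sq2 by simp
  finally have bq: "b^2 + z * b + 1 = 0" by simp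
  have b0: "b \<noteq> 0" using bq by auto
  have zb1: "z * b = -(b^2) - 1" using bq by linarith
  have zb: "z = - b - 1 / b"
  proof -
    have "z = (z * b) / b" using b0 by simp
    also have "\<dots> = (-(b^2) - 1) / b" by (simp only: zb1)
    also have "\<dots> = - b - 1 / b" using b0 by (simp add: field_simps power2_eq_square)
    finally show ?thesis .
  qed
  define B where "B = complex_of_real b"
  define iB where "iB = complex_of_real (1 / b)"
  define xc where "xc = complex_of_real x"
  define yc where "yc = complex_of_real y"
  define zc where "zc = complex_of_real z"
  have BiB: "B * iB = 1" unfolding B_def iB_def using b0
    by (metis of_real_mult of_real_1 right_inverse divide_inverse mult_1)
  have zc: "zc = - B - iB" unfolding zc_def B_def iB_def zb by simp
  define Xm where "Xm = mk2 xc 1 (-1) 0"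
  define Ym where "Ym = mk2 0 B (- iB) yc"
  have dX: "det Xm = 1" unfolding Xm_def by simp
  have dY: "det Ym = 1" unfolding Ym_def using BiB by simp
  have trX: "trace Xm = xc" unfolding Xm_def by simp
  have trY: "trace Ym = yc" unfolding Ym_def by simp
  have trYX: "trace (Ym ** Xm) = zc" unfolding Ym_def Xm_def zc by simp
  have iX: "matrix_inv Xm = mk2 0 (-1) 1 xc"
    unfolding Xm_def by (subst mk2_inv) simp_all
  have iY: "matrix_inv Ym = mk2 yc (- B) iB 0"
    unfolding Ym_def using BiB by (subst mk2_inv) simp_all
  define Cm where "Cm = matrix_inv Ym ** matrix_inv Xm ** Ym ** Xm"
  have dC: "det Cm = 1" unfolding Cm_def using dX dY by (simp add: det_mul iX iY BiB)
  have trC0: "trace Cm = xc^2 + yc^2 + zc^2 - xc*yc*zc - 2"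
  proof -
    have "trace Cm = B*B + (yc + B*xc) * (xc*iB + yc) + iB*iB"
      unfolding Cm_def iX iY unfolding Xm_def Ym_def mk2_mult mk2_trace by (simp add: algebra_simps)
    then show ?thesis unfolding zc using BiB by algebra
  qed
  have trC: "trace Cm = complex_of_real (x^2 + y^2 + z^2 - x*y*z - 2)"
    unfolding trC0 xc_def yc_def zc_def by simp
  define \<alpha> where "\<alpha> = 2 * pi * (2 * rt - 1/2)"
  have a0: "0 < \<alpha>" "\<alpha> < pi" unfolding \<alpha>_def using assms(1,2) by (auto simp: algebra_simps)
  have sa: "sin \<alpha> > 0" using a0 by (rule sin_gt_zero)
  have ca: "2 * cos \<alpha> = 2 - t^2"
  proof -
    have "\<alpha> = 2 * \<theta> - pi" unfolding \<alpha>_def \<theta>_def by (simp add: algebra_simps)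
    then have "cos \<alpha> = - cos (2 * \<theta>)" by (simp add: cos_diff)
    then show ?thesis unfolding t_def by (simp add: cos_double_cos power_mult_distrib)
  qed
  have kap: "x^2 + y^2 + z^2 - x*y*z - 2 = 2 - t^2" using x2 y2 z2 xyz by simp
  have conjC: "conj_class Cm (diag2 (cis (-(2 * pi * (2 * rt - 1/2)))) (cis (2 * pi * (2 * rt - 1/2))))"
  proof (rule conj_diag[OF dC])
    show "trace Cm = cis (-(2 * pi * (2 * rt - 1/2))) + cis (2 * pi * (2 * rt - 1/2))"
      unfolding trC kap using cis_sum[of "-\<alpha>"] ca unfolding \<alpha>_def by simp
    show "cis (-(2 * pi * (2 * rt - 1/2))) * cis (2 * pi * (2 * rt - 1/2)) = 1"
      by (simp add: cis_mult)
    show "cis (-(2 * pi * (2 * rt - 1/2))) \<noteq> cis (2 * pi * (2 * rt - 1/2))"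
    proof
      assume "cis (-(2 * pi * (2 * rt - 1/2))) = cis (2 * pi * (2 * rt - 1/2))"
      then have "Im (cis (-\<alpha>)) = Im (cis \<alpha>)" unfolding \<alpha>_def by simp
      then show False using sa by simp
    qed
  qed
  have inM: "in_M11 (2 * rt - 1/2) Xm Ym"
    unfolding in_M11_def SL2C_def using dX dY conjC Cm_def by simp
  have inv1: "invertible (mat 1 :: cmat2)" unfolding invertible_def by auto
  have mi1: "matrix_inv (mat 1 :: cmat2) = mat 1" by (rule matrix_inv_eq) simp_all
  have rr: "real_rep2 Xm Ym" unfolding real_rep2_def
    apply (rule exI[of _ "mat 1"])
    using inv1 mi1 unfolding Xm_def Ym_def xc_def yc_def B_def iB_def by (simp add: real_mat_mk2)
  show ?thesis
  proof (intro exI conjI)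
    show "in_M11 (2 * rt - 1/2) Xm Ym" by (rule inM)
    show "real_rep2 Xm Ym" by (rule rr)
    have "u = 2 - x^2" using x2 XX_def by simp
    then show "trace (M2 ** M1) = 2 - (trace Xm)^2" unfolding uu trX xc_def by simp
    have "v = 2 - y^2" using y2 YY_def by simp
    then show "trace (M3 ** M2) = 2 - (trace Ym)^2" unfolding vv trY yc_def by simp
    have "w = 2 - z^2" using z2 ZZ_def by simp
    then show "trace (M3 ** M1) = 2 - (trace (Ym ** Xm))^2" unfolding ww trYX zc_def by simp
  qed
qed

end
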